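(* For every integer $n\geq 2$, $$\sum_{k=1}^{n}B_{2k}B_{2n-2k}=\frac{1}{n+1}\sum_{k=1}^{n}B_{2k}B_{2n-2k}\binom{2n+2}{2k+2}+2nB_{2n}.$$
   Context: $B_n$ denotes the Bernoulli numbers, defined by $\frac{x}{e^x-1}=\sum_{n\ge 0}B_n\frac{x^n}{n!}$ (so $B_0=1$). *)

theory Defs
  imports Complex_Main "HOL-Computational_Algebra.Formal_Power_Series"
begin

definition bernoulli :: "nat \<Rightarrow> real" where
  "bernoulli n = fact n * fps_nth (fps_X / (fps_exp 1 - 1)) n"

end

theory Submission
  imports Defs
begin
unbundle fps_syntax



abbreviation EE :: "real fps" where "EE \<equiv> fps_exp 1"
abbreviation ff :: "real fps" where "ff \<equiv> fps_X / (fps_exp 1 - 1)"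

lemma ff_nth: "ff $ n = bernoulli n / fact n"
  by (simp add: bernoulli_def)

lemma EE1_ne: "EE - 1 \<noteq> 0"
proof
  assume "EE - 1 = 0"
  hence "(EE - 1) $ 1 = 0" by simp
  thus False by simp
qed

lemma ff_eq: "ff * (EE - 1) = fps_X"
proof -
  have "subdegree (EE - 1) \<le> 1" by (rule subdegree_leI) simp
  thus ?thesis using fps_times_divide_eq[OF EE1_ne] by simp
qed

lemma ff_eq2: "EE * ff = ff + fps_X"
  using ff_eq by (simp add: algebra_simps)

lemma bern_rec: "(\<Sum>j\<le>a. real (a choose j) * bernoulli j) = bernoulli a + (if a = 1 then 1 else 0)"
proof -
  have "(ff * EE) $ a = (ff + fps_X) $ a" using ff_eq2 by (simp add: mult.commute)
  hence "(\<Sum>i=0..a. 1 / fact (a - i) * (bernoulli i / fact i)) = bernoulli a / fact a + (if a = 1 then 1 else 0)"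
    unfolding fps_mult_nth fps_add_nth ff_nth by (simp add: mult.commute)
  hence "fact a * (\<Sum>i=0..a. 1 / fact (a - i) * (bernoulli i / fact i)) = bernoulli a + fact a * (if a = 1 then 1 else 0)"
    by (simp add: field_simps)
  moreover have "fact a * (\<Sum>i=0..a. 1 / fact (a - i) * (bernoulli i / fact i)) = (\<Sum>j\<le>a. real (a choose j) * bernoulli j)"
    by (simp add: sum_distrib_left atLeast0AtMost binomial_fact field_simps)
  ultimately show ?thesis by auto
qed

definition tw :: "real fps \<Rightarrow> real fps" where "tw a = Abs_fps (\<lambda>n. (-1)^n * a $ n)"

lemma tw_nth[simp]: "tw a $ n = (-1)^n * a $ n" by (simp add: tw_def)

lemma tw_mult: "tw (a * b) = tw a * tw b"
proof (rule fps_ext)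
  fix n
  have "\<And>i. i \<in> {0..n} \<Longrightarrow> (-1::real)^n = (-1)^i * (-1)^(n-i)"
    by (simp add: power_add[symmetric])
  thus "tw (a * b) $ n = (tw a * tw b) $ n"
    by (simp add: fps_mult_nth sum_distrib_left mult_ac)
qed

lemma tw_diff: "tw (a - b) = tw a - tw b"
  by (rule fps_ext) (simp add: algebra_simps)

lemma tw_one: "tw 1 = 1" by (rule fps_ext) simp
lemma tw_X: "tw fps_X = - fps_X" by (rule fps_ext) simp
lemma tw_E: "tw EE = fps_exp (-1)"
  by (rule fps_ext) (simp add: power_divide)

lemma ff_sym: "tw ff = ff + fps_X"
proof -
  have h1: "tw ff * (fps_exp (-1) - 1) = - fps_X"
    using arg_cong[OF ff_eq, of tw] by (simp add: tw_mult tw_diff tw_one tw_X tw_E)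
  have h2: "EE * fps_exp (-1) = 1"
    by (simp add: fps_exp_add_mult[symmetric])
  have "tw ff - EE * tw ff = tw ff * (EE * fps_exp (-1)) - EE * tw ff" using h2 by simp
  also have "\<dots> = EE * (tw ff * (fps_exp (-1) - 1))" by (simp add: algebra_simps)
  also have "\<dots> = - EE * fps_X" using h1 by simp
  finally have "tw ff - EE * tw ff = - EE * fps_X" .
  hence "(tw ff - fps_X) * (EE - 1) = fps_X"
    by (simp add: algebra_simps)
  hence "(tw ff - fps_X) * (EE - 1) = ff * (EE - 1)"
    using ff_eq by simp
  hence "tw ff - fps_X = ff" using EE1_ne by simp
  thus ?thesis by (simp add: algebra_simps)
qed

lemma bern_odd: assumes "odd n" "n \<noteq> 1" shows "bernoulli n = 0"
proof -
  have "tw ff $ n = (ff + fps_X) $ n" using ff_sym by simp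
  hence "- ff $ n = ff $ n" using assms by simp
  hence "ff $ n = 0" by simp
  thus ?thesis by (simp add: bernoulli_def)
qed

lemma bern0: "bernoulli 0 = 1"
proof -
  have "(ff * (EE - 1)) $ 1 = 1" using ff_eq by simp
  hence "ff $ 0 = 1" by simp
  thus ?thesis by (simp add: bernoulli_def)
qed


lemma chu: "(\<Sum>a\<le>N. (a choose i) * ((N - a) choose j)) = Suc N choose (i + j + 1)"
proof (induction N arbitrary: j)
  case 0
  then show ?case by (cases i; cases j) auto
next
  case (Suc N)
  show ?case
  proof (cases j)
    case 0
    then show ?thesis using sum_choose_upper[of i "Suc N"] by simp
  next
    case (Suc j')
    have "(\<Sum>a\<le>Suc N. (a choose i) * ((Suc N - a) choose j))
        = (\<Sum>a\<le>N. (a choose i) * ((Suc N - a) choose j))"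
      using Suc by simp
    also have "\<dots> = (\<Sum>a\<le>N. (a choose i) * ((N - a) choose j) + (a choose i) * ((N - a) choose j'))"
      by (rule sum.cong) (auto simp: Suc Suc_diff_le algebra_simps)
    also have "\<dots> = (Suc N choose (i + j + 1)) + (Suc N choose (i + j' + 1))"
      by (simp add: sum.distrib Suc.IH)
    also have "\<dots> = Suc (Suc N) choose (i + j + 1)"
      using Suc by simp
    finally show ?thesis .
  qed
qed

lemma bil:
  fixes u v :: "nat \<Rightarrow> real"
  shows "(\<Sum>m\<le>N. real (Suc N choose Suc m) * (\<Sum>j\<le>m. u j * v (m - j)))
       = (\<Sum>a\<le>N. (\<Sum>j\<le>a. real (a choose j) * u j) * (\<Sum>l\<le>N - a. real ((N - a) choose l) * v l))"
proof -
  define G where "G j l = real (Suc N choose (j + l + 1)) * u j * v l" for j l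
  have "(\<Sum>m\<le>N. real (Suc N choose Suc m) * (\<Sum>j\<le>m. u j * v (m - j)))
      = (\<Sum>m\<le>N. \<Sum>j\<le>m. G j (m - j))"
    by (auto simp: G_def sum_distrib_left mult_ac intro!: sum.cong)
  also have "\<dots> = (\<Sum>(j,l)\<in>{(j,l). j + l \<le> N}. G j l)"
    by (rule sum.triangle_reindex_eq[symmetric])
  also have "\<dots> = (\<Sum>(j,l)\<in>{..N} \<times> {..N}. G j l)"
  proof (rule sum.mono_neutral_left)
    show "\<forall>i\<in>{..N} \<times> {..N} - {(j, l). j + l \<le> N}. (case i of (j, l) \<Rightarrow> G j l) = 0"
    proof
      fix i assume "i \<in> {..N} \<times> {..N} - {(j, l). j + l \<le> N}"
      then obtain j l where "i = (j,l)" "N < j + l" by auto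
      thus "(case i of (j, l) \<Rightarrow> G j l) = 0"
        unfolding G_def by (simp add: binomial_eq_0 del: binomial_Suc_Suc)
    qed
  qed auto
  also have "\<dots> = (\<Sum>j\<le>N. \<Sum>l\<le>N. G j l)"
    by (rule sum.cartesian_product[symmetric])
  also have "\<dots> = (\<Sum>j\<le>N. \<Sum>l\<le>N. \<Sum>a\<le>N. real (a choose j) * u j * (real ((N - a) choose l) * v l))"
  proof (intro sum.cong refl)
    fix j l
    have "real (Suc N choose (j + l + 1)) = (\<Sum>a\<le>N. real (a choose j) * real ((N - a) choose l))"
      using arg_cong[OF chu[where N=N and i=j and j=l], of real] by (simp add: of_nat_sum del: binomial_Suc_Suc)
    hence "G j l = (\<Sum>a\<le>N. real (a choose j) * real ((N - a) choose l)) * u j * v l"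
      unfolding G_def by (simp only:)
    also have "\<dots> = (\<Sum>a\<le>N. real (a choose j) * real ((N - a) choose l) * u j * v l)"
      by (simp only: sum_distrib_right)
    also have "\<dots> = (\<Sum>a\<le>N. real (a choose j) * u j * (real ((N - a) choose l) * v l))"
      by (rule sum.cong) (simp_all only: mult_ac)
    finally show "G j l = (\<Sum>a\<le>N. real (a choose j) * u j * (real ((N - a) choose l) * v l))" .
  qed
  also have "\<dots> = (\<Sum>j\<le>N. \<Sum>a\<le>N. \<Sum>l\<le>N. real (a choose j) * u j * (real ((N - a) choose l) * v l))"
    by (rule sum.cong[OF refl]) (rule sum.swap)
  also have "\<dots> = (\<Sum>a\<le>N. \<Sum>j\<le>N. \<Sum>l\<le>N. real (a choose j) * u j * (real ((N - a) choose l) * v l))"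
    by (rule sum.swap)
  also have "\<dots> = (\<Sum>a\<le>N. (\<Sum>j\<le>N. real (a choose j) * u j) * (\<Sum>l\<le>N. real ((N - a) choose l) * v l))"
    by (simp add: sum_product)
  also have "\<dots> = (\<Sum>a\<le>N. (\<Sum>j\<le>a. real (a choose j) * u j) * (\<Sum>l\<le>N - a. real ((N - a) choose l) * v l))"
  proof (rule sum.cong[OF refl])
    fix a assume a: "a \<in> {..N}"
    have 1: "(\<Sum>j\<le>N. real (a choose j) * u j) = (\<Sum>j\<le>a. real (a choose j) * u j)"
      by (rule sum.mono_neutral_right) (use a in auto)
    have 2: "(\<Sum>l\<le>N. real ((N - a) choose l) * v l) = (\<Sum>l\<le>N - a. real ((N - a) choose l) * v l)"
      by (rule sum.mono_neutral_right) auto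
    show "(\<Sum>j\<le>N. real (a choose j) * u j) * (\<Sum>l\<le>N. real ((N - a) choose l) * v l) =
      (\<Sum>j\<le>a. real (a choose j) * u j) * (\<Sum>l\<le>N - a. real ((N - a) choose l) * v l)"
      using 1 2 by simp
  qed
  finally show ?thesis .
qed



definition ss :: "nat \<Rightarrow> real" where "ss N = (\<Sum>j\<le>N. bernoulli j * bernoulli (N - j))"

lemma recR: "(\<Sum>m\<le>N. real (Suc N choose Suc m) * ss m)
   = ss N + 2 * (if N \<ge> 1 then bernoulli (N - 1) else 0) + (if N = 2 then 1 else 0)"
proof -
  define c where "c a = bernoulli a + (if a = 1 then 1 else 0)" for a
  have "(\<Sum>m\<le>N. real (Suc N choose Suc m) * ss m) = (\<Sum>a\<le>N. c a * c (N - a))"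
    unfolding ss_def using bil[of N bernoulli bernoulli] by (simp add: bern_rec c_def)
  also have "\<dots> = (\<Sum>a\<le>N. bernoulli a * bernoulli (N - a)) + (\<Sum>a\<le>N. if a = 1 then bernoulli (N - a) else 0)
      + (\<Sum>a\<le>N. if a = N - 1 \<and> N \<ge> 1 then bernoulli a else 0)
      + (\<Sum>a\<le>N. if a = 1 \<and> N = 2 then 1 else 0)"
  proof -
    have "\<And>a. a \<in> {..N} \<Longrightarrow> c a * c (N - a) = bernoulli a * bernoulli (N - a) + (if a = 1 then bernoulli (N - a) else 0)
      + (if a = N - 1 \<and> N \<ge> 1 then bernoulli a else 0) + (if a = 1 \<and> N = 2 then 1 else 0)"
      unfolding c_def by (auto simp: algebra_simps)
    hence "(\<Sum>a\<le>N. c a * c (N - a)) = (\<Sum>a\<le>N. bernoulli a * bernoulli (N - a) + (if a = 1 then bernoulli (N - a) else 0)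
      + (if a = N - 1 \<and> N \<ge> 1 then bernoulli a else 0) + (if a = 1 \<and> N = 2 then 1 else 0))"
      by (rule sum.cong[OF refl])
    thus ?thesis by (simp only: sum.distrib)
  qed
  also have "\<dots> = ss N + 2 * (if N \<ge> 1 then bernoulli (N - 1) else 0) + (if N = 2 then 1 else 0)"
    unfolding ss_def by (simp add: sum.If_cases)
  finally show ?thesis .
qed

definition SS :: "real fps" where "SS = Abs_fps (\<lambda>k. if k = 0 then 0 else ss (k - 1) / fact k)"
definition QQ :: "real fps" where
  "QQ = Abs_fps (\<lambda>k. if k < 2 then 0 else 2 * bernoulli (k - 2) / fact k + (if k = 3 then 1/6 else 0))"

lemma SS_EE_nth: "fact (Suc N) * (SS * EE) $ (Suc N) = (\<Sum>m\<le>N. real (Suc N choose Suc m) * ss m)"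
proof -
  have "(SS * EE) $ (Suc N) = (\<Sum>i=0..Suc N. SS $ i * (1 / fact (Suc N - i)))"
    by (simp add: fps_mult_nth)
  also have "\<dots> = (\<Sum>m\<le>N. SS $ Suc m * (1 / fact (N - m)))"
    by (subst sum.atLeast0_atMost_Suc_shift) (simp add: SS_def atLeast0AtMost)
  also have "\<dots> = (\<Sum>m\<le>N. ss m / (fact (Suc m) * fact (N - m)))"
    by (simp add: SS_def)
  finally have "fact (Suc N) * (SS * EE) $ (Suc N) = (\<Sum>m\<le>N. fact (Suc N) * (ss m / (fact (Suc m) * fact (N - m))))"
    by (simp add: sum_distrib_left)
  also have "\<dots> = (\<Sum>m\<le>N. real (Suc N choose Suc m) * ss m)"
  proof (rule sum.cong[OF refl])
    fix m assume "m \<in> {..N}"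
    hence "Suc m \<le> Suc N" by simp
    from binomial_fact[OF this, where 'a = real]
    have "real (Suc N choose Suc m) = fact (Suc N) / (fact (Suc m) * fact (N - m))" by simp
    thus "fact (Suc N) * (ss m / (fact (Suc m) * fact (N - m))) = real (Suc N choose Suc m) * ss m"
      by simp
  qed
  finally show ?thesis .
qed

lemma SS_eq: "SS * EE = SS + QQ"
proof (rule fps_ext)
  fix k show "(SS * EE) $ k = (SS + QQ) $ k"
  proof (cases k)
    case 0 then show ?thesis by (simp add: SS_def QQ_def)
  next
    case (Suc N)
    have q: "fact (Suc N) * QQ $ Suc N = 2 * (if N \<ge> 1 then bernoulli (N - 1) else 0) + (if N = 2 then 1 else 0)"
    proof (cases "N = 0")
      case True then show ?thesis by (simp add: QQ_def)
    next
      case False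
      hence "QQ $ Suc N = 2 * bernoulli (N - 1) / fact (Suc N) + (if N = 2 then 1/6 else 0)"
        by (simp add: QQ_def numeral_3_eq_3)
      moreover have "fact (Suc 2) = (6::real)" by (simp add: numeral_3_eq_3[symmetric] fact_numeral)
      ultimately show ?thesis using False by auto
    qed
    have s: "fact (Suc N) * SS $ Suc N = ss N" by (simp add: SS_def)
    have "fact (Suc N) * (SS + QQ) $ Suc N = ss N + 2 * (if N \<ge> 1 then bernoulli (N - 1) else 0) + (if N = 2 then 1 else 0)"
      using q s by (simp add: distrib_left)
    hence "fact (Suc N) * (SS * EE) $ Suc N = fact (Suc N) * (SS + QQ) $ Suc N"
      using SS_EE_nth recR by simp
    thus ?thesis using Suc by simp
  qed
qed

lemma SS_QQ: "fps_X * SS = QQ * ff"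
proof -
  have "SS * (EE - 1) = QQ" using SS_eq by (simp add: algebra_simps)
  have "fps_X * SS = SS * (ff * (EE - 1))" using ff_eq by (simp add: mult.commute)
  also have "\<dots> = (SS * (EE - 1)) * ff" by (simp add: mult_ac)
  also have "\<dots> = QQ * ff" using \<open>SS * (EE - 1) = QQ\<close> by simp
  finally show ?thesis .
qed

lemma aux_field: "(n::real) + 2 > 0 \<Longrightarrow> F \<noteq> 0 \<Longrightarrow> G \<noteq> 0 \<Longrightarrow>
   A * (2 * x / F * (y / G)) = 2 / (n + 2) * ((n + 2) * A / (F * G)) * (x * y)"
proof -
  assume h: "(n::real) + 2 > 0" "F \<noteq> 0" "G \<noteq> 0"
  have "2 / (n + 2) * ((n + 2) * A / (F * G)) = 2 * A / (F * G)" using h by simp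
  thus ?thesis using h by simp
qed

lemma ss_formula:
  assumes N: "N \<ge> 4" "even N"
  shows "ss N = (\<Sum>j\<le>N. 2 / (real N + 2) * real ((N + 2) choose (j + 2)) * (bernoulli j * bernoulli (N - j)))"
proof -
  have bN1: "bernoulli (N - 1) = 0" using N by (intro bern_odd) auto
  have "(fps_X * SS) $ Suc (Suc N) = (QQ * ff) $ Suc (Suc N)" using SS_QQ by simp
  moreover have "(fps_X * SS) $ Suc (Suc N) = ss N / fact (Suc N)"
    by (simp add: SS_def)
  moreover have "(QQ * ff) $ Suc (Suc N) = (\<Sum>i=0..Suc (Suc N). QQ $ i * ff $ (Suc (Suc N) - i))"
    by (simp only: fps_mult_nth)
  ultimately have "ss N / fact (Suc N) = (\<Sum>i=0..Suc (Suc N). QQ $ i * ff $ (Suc (Suc N) - i))"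
    by simp
  also have "\<dots> = (\<Sum>j\<le>N. QQ $ Suc (Suc j) * ff $ (N - j))"
    apply (subst sum.atLeast0_atMost_Suc_shift)
    apply (subst sum.atLeast0_atMost_Suc_shift)
    apply (simp add: QQ_def atLeast0AtMost del: sum.atMost_Suc)
    done
  also have "\<dots> = (\<Sum>j\<le>N. 2 * bernoulli j / fact (j + 2) * (bernoulli (N - j) / fact (N - j)))"
  proof (rule sum.cong[OF refl])
    fix j assume "j \<in> {..N}"
    show "QQ $ Suc (Suc j) * ff $ (N - j) = 2 * bernoulli j / fact (j + 2) * (bernoulli (N - j) / fact (N - j))"
      using bN1 by (auto simp: QQ_def ff_nth numeral_3_eq_3)
  qed
  finally have eq: "ss N / fact (Suc N) = (\<Sum>j\<le>N. 2 * bernoulli j / fact (j + 2) * (bernoulli (N - j) / fact (N - j)))" .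
  have "ss N = fact (Suc N) * (ss N / fact (Suc N))" by simp
  also have "\<dots> = fact (Suc N) * (\<Sum>j\<le>N. 2 * bernoulli j / fact (j + 2) * (bernoulli (N - j) / fact (N - j)))"
    by (simp only: eq)
  also have "\<dots> = (\<Sum>j\<le>N. 2 / (real N + 2) * real ((N + 2) choose (j + 2)) * (bernoulli j * bernoulli (N - j)))"
    unfolding sum_distrib_left
  proof (rule sum.cong[OF refl])
    fix j assume "j \<in> {..N}"
    hence "j + 2 \<le> N + 2" by simp
    from binomial_fact[OF this, where 'a = real]
    have c: "real ((N + 2) choose (j + 2)) = fact (N + 2) / (fact (j + 2) * fact (N - j))" by simp
    have f: "fact (N + 2) = (real N + 2) * fact (Suc N)"
      by (simp add: algebra_simps)
    show "fact (Suc N) * (2 * bernoulli j / fact (j + 2) * (bernoulli (N - j) / fact (N - j))) =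
          2 / (real N + 2) * real ((N + 2) choose (j + 2)) * (bernoulli j * bernoulli (N - j))"
      unfolding c f by (rule aux_field) auto
  qed
  finally show ?thesis .
qed

lemma even_sum:
  fixes g :: "nat \<Rightarrow> real"
  assumes "\<And>j. odd j \<Longrightarrow> g j = 0"
  shows "(\<Sum>j\<le>2*n. g j) = (\<Sum>k\<le>n. g (2*k))"
proof (induction n)
  case 0 then show ?case by simp
next
  case (Suc n)
  have "(\<Sum>j\<le>2 * Suc n. g j) = (\<Sum>j\<le>2*n. g j) + g (Suc (2*n)) + g (Suc (Suc (2*n)))"
    by simp
  also have "\<dots> = (\<Sum>k\<le>n. g (2*k)) + g (2 * Suc n)" using Suc assms by simp
  finally show ?case by simp
qed



lemma choose2: "real ((2*n+2) choose 2) = (real n + 1) * (2 * real n + 1)"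
proof -
  have "(2*n+2) choose 2 = (n+1) * (2*n+1)"
  proof -
    have "(2*n+2) choose 2 = (2*n+2) * (2*n+1) div 2" by (simp add: choose_two)
    also have "(2*n+2) * (2*n+1) = 2 * ((n+1) * (2*n+1))" by simp
    finally show ?thesis by simp
  qed
  hence "real ((2*n+2) choose 2) = real ((n+1) * (2*n+1))" by (simp only:)
  thus ?thesis by (simp add: algebra_simps)
qed

theorem mainTheorem6:
  fixes n :: nat
  assumes "n \<ge> 2"
  shows "(\<Sum>k=1..n. bernoulli (2*k) * bernoulli (2*n - 2*k)) =
    1 / (real n + 1) * (\<Sum>k=1..n. bernoulli (2*k) * bernoulli (2*n - 2*k) * real ((2*n+2) choose (2*k+2)))
    + 2 * real n * bernoulli (2*n)"
proof -
  define T where "T k = bernoulli (2*k) * bernoulli (2*n - 2*k)" for k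
  define Cc where "Cc k = real ((2*n+2) choose (2*k+2))" for k
  have oddz: "bernoulli j * bernoulli (2*n - j) = 0" if "odd j" for j
  proof (cases "j = 1")
    case True
    have "bernoulli (2*n - 1) = 0" using assms by (intro bern_odd) auto
    thus ?thesis using True by simp
  next
    case False thus ?thesis using that bern_odd by simp
  qed
  have N: "2*n \<ge> 4" "even (2*n)" using assms by auto
  have e1: "ss (2*n) = (\<Sum>k\<le>n. T k)"
    unfolding ss_def T_def by (rule even_sum) (use oddz in auto)
  have "ss (2*n) = (\<Sum>j\<le>2*n. 2 / (real (2*n) + 2) * real ((2*n + 2) choose (j + 2)) * (bernoulli j * bernoulli (2*n - j)))"
    by (rule ss_formula[OF N])
  also have "\<dots> = (\<Sum>k\<le>n. 2 / (real (2*n) + 2) * real ((2*n + 2) choose (2*k + 2)) * (bernoulli (2*k) * bernoulli (2*n - 2*k)))"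
    by (rule even_sum) (use oddz in auto)
  also have "\<dots> = (\<Sum>k\<le>n. 1 / (real n + 1) * (T k * Cc k))"
    by (rule sum.cong[OF refl]) (simp add: T_def Cc_def field_simps)
  finally have e2: "(\<Sum>k\<le>n. T k) = 1 / (real n + 1) * (\<Sum>k\<le>n. T k * Cc k)"
    using e1 by (simp add: sum_distrib_left)
  have split: "\<And>g :: nat \<Rightarrow> real. (\<Sum>k\<le>n. g k) = g 0 + (\<Sum>k=1..n. g k)"
  proof -
    fix g :: "nat \<Rightarrow> real"
    have "{..n} = insert 0 {1..n}" by auto
    thus "(\<Sum>k\<le>n. g k) = g 0 + (\<Sum>k=1..n. g k)" by simp
  qed
  have T0: "T 0 = bernoulli (2*n)" by (simp add: T_def bern0)
  have C0: "Cc 0 = (real n + 1) * (2 * real n + 1)" unfolding Cc_def mult_0_right add_0 by (rule choose2)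
  have "T 0 + (\<Sum>k=1..n. T k) = 1 / (real n + 1) * (T 0 * Cc 0 + (\<Sum>k=1..n. T k * Cc k))"
    using e2 split[of T] split[of "\<lambda>k. T k * Cc k"] by simp
  hence "(\<Sum>k=1..n. T k) = 1 / (real n + 1) * (\<Sum>k=1..n. T k * Cc k) + 2 * real n * bernoulli (2*n)"
    unfolding T0 C0 by (simp add: field_simps)
  thus ?thesis unfolding T_def Cc_def .
qed


end
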